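(* Let $G$ be a graph on $n$ vertices with treewidth $t$, and let $(\{X_i : i\in I\}, r, T)$ be a normalized tree decomposition of $G$ of width $t$. Then there exists $l \in I$ such that $V(G)\setminus X_l$ can be partitioned into three (possibly empty) sets $V_1, V_2, V_3$ such that $G$ has no edge between $V_i$ and $V_j$ for $i\neq j$, and $|V_i| \leq \frac12\left(n - |X_l| + 1\right)$ for each $i\in\{1,2,3\}$.
   Context: A tree decomposition of $G$ is a pair $(\{X_i : i\in I\}, T)$ where $T$ is a tree with node set $I$ and each $X_i\subseteq V(G)$, such that: (1) $\bigcup_{i\in I} X_i = V(G)$; (2) for every edge $\{u,v\}\in E(G)$ there is $i\in I$ with $u,v\in X_i$; (3) for all $i,j,k\in I$, if $j$ lies on the path in $T$ from $i$ to $k$, then $X_i\cap X_k\subseteq X_j$. Its width is $\max_{i\in I}|X_i| - 1$, and the treewidth of $G$ is the minimum width over all tree decompositions of $G$. A normalized tree decomposition is a triple $(\{X_i : i\in I\}, r, T)$ where $(\{X_i\},T)$ is a tree decomposition, $T$ is rooted at $r\in I$, $|X_r| = 1$, and for every node $i$ and every child $i'$ of $i$, the symmetric difference of $X_{i'}$ and $X_i$ has exactly one element. *)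

theory Defs
  imports Complex_Main
begin

definition graph :: "'a set \<Rightarrow> 'a set set \<Rightarrow> bool" where
  "graph V E \<longleftrightarrow> finite V \<and> (\<forall>e\<in>E. \<exists>u v. e = {u, v} \<and> u \<noteq> v \<and> u \<in> V \<and> v \<in> V)"

fun walk :: "'b set set \<Rightarrow> 'b list \<Rightarrow> bool" where
  "walk ET [] = False"
| "walk ET [x] = True"
| "walk ET (x # y # xs) = ({x, y} \<in> ET \<and> walk ET (y # xs))"

definition spath :: "'b set set \<Rightarrow> 'b list \<Rightarrow> bool" where
  "spath ET xs \<longleftrightarrow> walk ET xs \<and> distinct xs"

definition on_path :: "'b set set \<Rightarrow> 'b \<Rightarrow> 'b \<Rightarrow> 'b \<Rightarrow> bool" where
  "on_path ET i j k \<longleftrightarrow> (\<exists>xs. spath ET xs \<and> hd xs = i \<and> last xs = k \<and> j \<in> set xs)"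

definition tree :: "'b set \<Rightarrow> 'b set set \<Rightarrow> bool" where
  "tree I ET \<longleftrightarrow> graph I ET \<and> I \<noteq> {} \<and>
     (\<forall>u\<in>I. \<forall>v\<in>I. \<exists>xs. walk ET xs \<and> hd xs = u \<and> last xs = v) \<and>
     \<not> (\<exists>xs. spath ET xs \<and> length xs \<ge> 3 \<and> {last xs, hd xs} \<in> ET)"

definition tree_decomp :: "'a set \<Rightarrow> 'a set set \<Rightarrow> 'b set \<Rightarrow> 'b set set \<Rightarrow> ('b \<Rightarrow> 'a set) \<Rightarrow> bool" where
  "tree_decomp V E I ET X \<longleftrightarrow> tree I ET \<and> (\<forall>i\<in>I. X i \<subseteq> V) \<and>
     (\<Union>i\<in>I. X i) = V \<and>
     (\<forall>e\<in>E. \<exists>i\<in>I. e \<subseteq> X i) \<and>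
     (\<forall>i\<in>I. \<forall>j\<in>I. \<forall>k\<in>I. on_path ET i j k \<longrightarrow> X i \<inter> X k \<subseteq> X j)"

definition width :: "'b set \<Rightarrow> ('b \<Rightarrow> 'a set) \<Rightarrow> nat" where
  "width I X = Max ((\<lambda>i. card (X i)) ` I) - 1"

text \<open>Treewidth: minimum width over all tree decompositions. Index sets are
  taken in nat, which loses no generality since trees are finite.\<close>
definition treewidth :: "'a set \<Rightarrow> 'a set set \<Rightarrow> nat" where
  "treewidth V E = (LEAST w. \<exists>(I :: nat set) ET X. tree_decomp V E I ET X \<and> width I X = w)"

definition child :: "'b set set \<Rightarrow> 'b \<Rightarrow> 'b \<Rightarrow> 'b \<Rightarrow> bool" where
  "child ET r i i' \<longleftrightarrow> {i, i'} \<in> ET \<and> i \<noteq> i' \<and> on_path ET r i i'"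

definition normalized_tree_decomp ::
  "'a set \<Rightarrow> 'a set set \<Rightarrow> 'b set \<Rightarrow> 'b \<Rightarrow> 'b set set \<Rightarrow> ('b \<Rightarrow> 'a set) \<Rightarrow> bool" where
  "normalized_tree_decomp V E I r ET X \<longleftrightarrow> tree_decomp V E I ET X \<and> r \<in> I \<and>
     card (X r) = 1 \<and>
     (\<forall>i\<in>I. \<forall>i'\<in>I. child ET r i i' \<longrightarrow> card ((X i' - X i) \<union> (X i - X i')) = 1)"

end

theory Submission
  imports Defs
begin


lemma walk_Cons: "walk ET (x # xs) \<longleftrightarrow> xs = [] \<or> ({x, hd xs} \<in> ET \<and> walk ET xs)"
  by (cases xs) auto

lemma walk_append: "xs \<noteq> [] \<Longrightarrow> ys \<noteq> [] \<Longrightarrow>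
  walk ET (xs @ ys) \<longleftrightarrow> walk ET xs \<and> walk ET ys \<and> {last xs, hd ys} \<in> ET"
proof (induction xs)
  case Nil then show ?case by simp
next
  case (Cons x xs)
  show ?case
  proof (cases "xs = []")
    case True then show ?thesis using Cons.prems by (auto simp: walk_Cons)
  next
    case False then show ?thesis using Cons by (auto simp: walk_Cons)
  qed
qed

lemma walk_appendD1: "walk ET (xs @ ys) \<Longrightarrow> xs \<noteq> [] \<Longrightarrow> walk ET xs"
  by (cases "ys = []") (auto simp: walk_append)

lemma walk_appendD2: "walk ET (xs @ ys) \<Longrightarrow> ys \<noteq> [] \<Longrightarrow> walk ET ys"
  by (cases "xs = []") (auto simp: walk_append)

lemma walk_join: "walk ET (xs @ [x]) \<Longrightarrow> walk ET (x # ys) \<Longrightarrow> walk ET (xs @ x # ys)"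
  by (induction xs) (auto simp: walk_Cons hd_append)

lemma walk_rev: "walk ET (rev xs) \<longleftrightarrow> walk ET xs"
proof (induction xs)
  case Nil then show ?case by simp
next
  case (Cons x xs)
  show ?case
  proof (cases "xs = []")
    case True then show ?thesis by simp
  next
    case False
    then show ?thesis using Cons
      by (auto simp add: walk_append walk_Cons hd_rev last_rev insert_commute)
  qed
qed

lemma spath_rev: "spath ET (rev xs) \<longleftrightarrow> spath ET xs"
  by (simp add: spath_def walk_rev)

lemma spath_prefix: "spath ET (xs @ ys) \<Longrightarrow> xs \<noteq> [] \<Longrightarrow> spath ET xs"
  by (auto simp: spath_def dest: walk_appendD1)

lemma spath_suffix: "spath ET (xs @ ys) \<Longrightarrow> ys \<noteq> [] \<Longrightarrow> spath ET ys"
  by (auto simp: spath_def dest: walk_appendD2)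

lemma walk_to_spath: "walk ET xs \<Longrightarrow>
  \<exists>ys. spath ET ys \<and> hd ys = hd xs \<and> last ys = last xs \<and> set ys \<subseteq> set xs"
proof (induction "length xs" arbitrary: xs rule: less_induct)
  case less
  show ?case
  proof (cases "distinct xs")
    case True thus ?thesis using less.prems by (auto simp: spath_def)
  next
    case False
    then obtain a x b c where xs: "xs = a @ [x] @ b @ [x] @ c" using not_distinct_decomp by blast
    have w1: "walk ET (a @ [x])" using less.prems xs walk_appendD1[of ET "a @ [x]" "b @ [x] @ c"] by simp
    have w2: "walk ET (x # c)" using less.prems xs walk_appendD2[of ET "a @ [x] @ b" "x # c"] by simp
    have w: "walk ET (a @ x # c)" using walk_join[OF w1 w2] .
    have "length (a @ x # c) < length xs" using xs by simp
    then obtain ys where ys: "spath ET ys" "hd ys = hd (a @ x # c)" "last ys = last (a @ x # c)"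
      "set ys \<subseteq> set (a @ x # c)" using less.hyps w by blast
    have "hd (a @ x # c) = hd xs" using xs by (cases a) auto
    moreover have "last (a @ x # c) = last xs" using xs by (cases c) auto
    moreover have "set (a @ x # c) \<subseteq> set xs" using xs by auto
    ultimately show ?thesis using ys by (intro exI[of _ ys]) auto
  qed
qed



locale tr =
  fixes I :: "'b set" and ET :: "'b set set"
  assumes tree: "tree I ET"
begin

lemma finI: "finite I" using tree by (simp add: tree_def graph_def)

lemma edge: "{u,v} \<in> ET \<Longrightarrow> u \<noteq> v \<and> u \<in> I \<and> v \<in> I"
proof -
  assume e: "{u,v} \<in> ET"
  then obtain a b where "{u,v} = {a,b}" "a \<noteq> b" "a \<in> I" "b \<in> I"
    using tree unfolding tree_def graph_def by blast
  then show ?thesis by (auto simp: doubleton_eq_iff)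
qed

lemma nocycle: "spath ET xs \<Longrightarrow> length xs \<ge> 3 \<Longrightarrow> {last xs, hd xs} \<in> ET \<Longrightarrow> False"
  using tree unfolding tree_def by blast

lemma connected: "u \<in> I \<Longrightarrow> v \<in> I \<Longrightarrow> \<exists>xs. spath ET xs \<and> hd xs = u \<and> last xs = v"
proof -
  assume "u \<in> I" "v \<in> I"
  then obtain xs where "walk ET xs" "hd xs = u" "last xs = v" using tree unfolding tree_def by blast
  then show ?thesis using walk_to_spath by metis
qed

lemma spath_unique: "spath ET xs \<Longrightarrow> spath ET ys \<Longrightarrow> hd xs = hd ys \<Longrightarrow> last xs = last ys \<Longrightarrow> xs = ys"
proof (induction xs arbitrary: ys)
  case Nil thus ?case by (simp add: spath_def)
next
  case (Cons u xs')
  obtain ys' where ys: "ys = u # ys'" using Cons.prems by (cases ys) (auto simp: spath_def)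
  have dx: "distinct (u # xs')" and dy: "distinct (u # ys')"
    using Cons.prems ys by (auto simp: spath_def)
  show ?case
  proof (cases "xs' = []")
    case True
    show ?thesis
    proof (rule ccontr)
      assume "u # xs' \<noteq> ys"
      then have "ys' \<noteq> []" using True ys by simp
      then have "last ys' \<in> set ys'" "last ys = last ys'" using ys by auto
      then show False using Cons.prems(4) True dy by simp
    qed
  next
    case xne: False
    show ?thesis
    proof (cases "ys' = []")
      case True
      have "last xs' \<in> set xs'" "last (u # xs') = last xs'" using xne by auto
      then show ?thesis using Cons.prems(4) True dx ys by simp
    next
      case yne: False
      have wx: "walk ET (u # xs')" and wy: "walk ET (u # ys')"
        using Cons.prems ys by (auto simp: spath_def)
      have sx: "spath ET xs'" using spath_suffix[of ET "[u]" xs'] Cons.prems xne by simp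
      have sy: "spath ET ys'" using spath_suffix[of ET "[u]" ys'] Cons.prems ys yne by simp
      have lasteq: "last xs' = last ys'" using Cons.prems(4) ys xne yne by simp
      show ?thesis
      proof (cases "hd xs' = hd ys'")
        case True
        have "xs' = ys'" by (rule Cons.IH[OF sx sy True lasteq])
        then show ?thesis using ys by simp
      next
        case False
        have "\<exists>w\<in>set xs'. w \<in> set ys'" using lasteq xne yne by (metis last_in_set)
        then obtain p w q where pwq: "xs' = p @ w # q" "w \<in> set ys'" "\<forall>z\<in>set p. z \<notin> set ys'"
          using split_list_first_prop[of xs' "\<lambda>z. z \<in> set ys'"] by blast
        obtain s t where st: "ys' = s @ w # t" using pwq(2) split_list by metis
        let ?c = "u # p @ w # rev s"
        have w1: "walk ET ((u # p) @ [w])"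
          using wx pwq walk_appendD1[of ET "(u # p) @ [w]" q] by simp
        have w2: "walk ET (s @ [w])"
          using wy st walk_appendD1[of ET "s @ [w]" t] walk_appendD2[of ET "[u]" "s @ [w] @ t"]
          by simp
        have w3: "walk ET (w # rev s)" using w2 walk_rev[of ET "s @ [w]"] by simp
        have wc: "walk ET ?c" using walk_join[OF w1 w3] by simp
        have dc: "distinct ?c" using dx dy pwq st by auto
        have len: "length ?c \<ge> 3"
        proof (rule ccontr)
          assume "\<not> length ?c \<ge> 3"
          then have "p = []" "s = []" by (cases p; cases s; simp)+
          then show False using False pwq st by simp
        qed
        have lc: "last ?c = hd ys'" using st by (cases s) auto
        have "{hd ys', u} \<in> ET" using wy yne by (simp add: walk_Cons insert_commute)
        then show ?thesis using nocycle[of ?c] wc dc len lc by (simp add: spath_def)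
      qed
    qed
  qed
qed

definition pth :: "'b \<Rightarrow> 'b \<Rightarrow> 'b list" where
  "pth i k = (THE xs. spath ET xs \<and> hd xs = i \<and> last xs = k)"

lemma pth_eq: "spath ET xs \<Longrightarrow> pth (hd xs) (last xs) = xs"
  unfolding pth_def by (rule the_equality) (auto intro: spath_unique)

lemma pth: "i \<in> I \<Longrightarrow> k \<in> I \<Longrightarrow> spath ET (pth i k) \<and> hd (pth i k) = i \<and> last (pth i k) = k"
  using connected pth_eq by metis

definition nb :: "'b \<Rightarrow> 'b \<Rightarrow> 'b" where "nb l k = hd (tl (pth l k))"

definition side :: "'b \<Rightarrow> 'b \<Rightarrow> 'b set" where "side l j = {k\<in>I. k \<noteq> l \<and> nb l k = j}"

lemma pth_step:
  assumes "l \<in> I" "k \<in> I" "k \<noteq> l"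
  shows "pth l k = l # pth (nb l k) k \<and> {l, nb l k} \<in> ET \<and> l \<notin> set (pth (nb l k) k) \<and> nb l k \<in> I"
proof -
  have p: "spath ET (pth l k)" "hd (pth l k) = l" "last (pth l k) = k" using pth assms by auto
  then obtain ys where ys: "pth l k = l # ys" by (cases "pth l k") (auto simp: spath_def)
  have yne: "ys \<noteq> []" using ys p assms by auto
  have sy: "spath ET ys" using spath_suffix[of ET "[l]" ys] p ys yne by simp
  have "pth (hd ys) (last ys) = ys" using pth_eq[OF sy] .
  moreover have "hd ys = nb l k" using ys by (simp add: nb_def)
  moreover have "last ys = k" using p ys yne by simp
  moreover have "{l, hd ys} \<in> ET" using p ys yne by (simp add: spath_def walk_Cons)
  moreover have "l \<notin> set ys" using p ys by (simp add: spath_def)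
  ultimately show ?thesis using ys edge by metis
qed

lemma pth_edge: "{l,j} \<in> ET \<Longrightarrow> pth l j = [l,j]"
  using pth_eq[of "[l,j]"] edge[of l j] by (simp add: spath_def)

lemma in_side: "{l,j} \<in> ET \<Longrightarrow> j \<in> side l j"
  using pth_edge[of l j] edge[of l j] by (auto simp add: side_def nb_def)

lemma side_I: "side l j \<subseteq> I" by (auto simp: side_def)

lemma side_pth: "k \<in> side l j \<Longrightarrow> l \<in> I \<Longrightarrow> pth l k = l # pth j k \<and> {l,j} \<in> ET \<and> l \<notin> set (pth j k) \<and> j \<in> I"
  using pth_step[of l k] by (auto simp: side_def)

lemma side_split:
  assumes e: "{l,j} \<in> ET" and k: "k \<in> I"
  shows "k \<in> side l j \<longleftrightarrow> k \<notin> side j l"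
proof
  have lI: "l \<in> I" and jI: "j \<in> I" and lj: "l \<noteq> j" using edge e by auto
  assume a: "k \<in> side l j"
  have 1: "l \<notin> set (pth j k)" using side_pth[OF a lI] by auto
  show "k \<notin> side j l"
  proof
    assume "k \<in> side j l"
    then have "pth j k = j # pth l k" using side_pth jI by auto
    moreover have "hd (pth l k) = l" using pth lI k by auto
    moreover have "pth l k \<noteq> []" using pth lI k by (metis spath_def walk.simps(1))
    ultimately show False using 1 by (metis hd_in_set list.set_intros(2))
  qed
next
  have lI: "l \<in> I" and jI: "j \<in> I" and lj: "l \<noteq> j" using edge e by auto
  have e': "{j,l} \<in> ET" using e by (simp add: insert_commute)
  assume a: "k \<notin> side j l"
  show "k \<in> side l j"
  proof (cases "k = l")
    case True then show ?thesis using a in_side[OF e'] by simp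
  next
    case kl: False
    show ?thesis
    proof (cases "k = j")
      case True then show ?thesis using in_side[OF e] by simp
    next
      case kj: False
      have p: "spath ET (pth j k)" "hd (pth j k) = j" "last (pth j k) = k" using pth jI k by auto
      show ?thesis
      proof (cases "l \<in> set (pth j k)")
        case True
        then obtain a b where ab: "pth j k = a @ l # b" using split_list by metis
        have ane: "a \<noteq> []" using ab p lj by (cases a) auto
        have sa: "spath ET (a @ [l])" using spath_prefix[of ET "a @ [l]" b] p ab by simp
        have "hd (a @ [l]) = j" using ab p ane by simp
        then have "pth j l = a @ [l]" using pth_eq[OF sa] by simp
        then have "a = [j]" using pth_edge[OF e'] by simp
        then have "nb j k = l" using ab by (simp add: nb_def)
        then have "k \<in> side j l" using k kj by (simp add: side_def)
        then show ?thesis using a by simp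
      next
        case False
        have "spath ET (l # pth j k)"
          using p False e by (cases "pth j k") (auto simp: spath_def walk_Cons)
        then have "pth l k = l # pth j k" using pth_eq p by (metis (no_types, lifting) hd_Cons_tl last_ConsR list.distinct(1) list.sel(1) spath_def walk.simps(1))
        then have "nb l k = j" using p by (cases "pth j k") (auto simp: nb_def spath_def)
        then show ?thesis using k kl by (simp add: side_def)
      qed
    qed
  qed
qed

lemma sep_node:
  assumes lI: "l \<in> I" and k: "k \<in> side l j" and k': "k' \<in> side l j'" and jj: "j \<noteq> j'"
  shows "on_path ET k l k'"
proof -
  have a: "pth l k = l # pth j k" "l \<notin> set (pth j k)" "j \<in> I" using side_pth[OF k lI] by auto
  have b: "pth l k' = l # pth j' k'" "l \<notin> set (pth j' k')" "j' \<in> I" using side_pth[OF k' lI] by auto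
  have kI: "k \<in> I" "k' \<in> I" using k k' side_I by auto
  define p where "p = pth j k"
  define p' where "p' = pth j' k'"
  have sp: "spath ET (l # p)" "last (l # p) = k" using pth[OF lI kI(1)] a p_def by auto
  have sp': "spath ET (l # p')" "last (l # p') = k'" using pth[OF lI kI(2)] b p'_def by auto
  have hp: "hd p = j" "p \<noteq> []" using pth[OF a(3) kI(1)] p_def by (auto simp: spath_def)
  have hp': "hd p' = j'" "p' \<noteq> []" using pth[OF b(3) kI(2)] p'_def by (auto simp: spath_def)
  have disj: "set p \<inter> set p' = {}"
  proof (rule ccontr)
    assume "set p \<inter> set p' \<noteq> {}"
    then obtain w where w: "w \<in> set p" "w \<in> set p'" by blast
    obtain p1 p2 where 1: "p = p1 @ w # p2" using w split_list by metis
    obtain q1 q2 where 2: "p' = q1 @ w # q2" using w split_list by metis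
    have "spath ET ((l # p1) @ [w])" using spath_prefix[of ET "(l # p1) @ [w]" p2] sp 1 by simp
    then have "pth l w = l # p1 @ [w]" using pth_eq by fastforce
    moreover have "spath ET ((l # q1) @ [w])" using spath_prefix[of ET "(l # q1) @ [w]" q2] sp' 2 by simp
    then have "pth l w = l # q1 @ [w]" using pth_eq by fastforce
    ultimately have "p1 @ [w] = q1 @ [w]" by simp
    then have "hd p = hd p'" using 1 2 by (cases p1; cases q1) auto
    then show False using hp hp' jj by simp
  qed
  let ?z = "rev p @ l # p'"
  have w1: "walk ET (rev p @ [l])" using sp walk_rev[of ET "l # p"] by (simp add: spath_def)
  have "walk ET ?z" using walk_join[OF w1] sp' by (simp add: spath_def)
  moreover have "distinct ?z" using sp sp' disj by (auto simp: spath_def)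
  moreover have "hd ?z = k" using hp sp by (simp add: hd_rev)
  moreover have "last ?z = k'" using sp' by simp
  ultimately show ?thesis unfolding on_path_def spath_def by (intro exI[of _ ?z]) auto
qed

lemma side_sub:
  assumes e1: "{l,j} \<in> ET" and e2: "{j,k} \<in> ET" and kl: "k \<noteq> l"
  shows "side j k \<subset> side l j"
proof -
  have jI: "j \<in> I" using edge e1 by auto
  have "side j k \<subseteq> side l j"
  proof
    fix m assume m: "m \<in> side j k"
    then have "m \<notin> side j l" using kl by (auto simp: side_def)
    then show "m \<in> side l j" using side_split[OF e1] m side_I by blast
  qed
  moreover have "j \<in> side l j" "j \<notin> side j k" using in_side[OF e1] by (auto simp: side_def)
  ultimately show ?thesis by blast
qed

end


context tr begin
lemma child_dir1:
  assumes rI: "r \<in> I" and e: "{l,j} \<in> ET" and r: "r \<in> side j l"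
  shows "on_path ET r l j"
proof -
  have jI: "j \<in> I" using edge e by auto
  have a: "pth j r = j # pth l r" "l \<in> I" using side_pth[OF r jI] by auto
  have p: "spath ET (pth j r)" "hd (pth j r) = j" "last (pth j r) = r" using pth jI rI by auto
  have pl: "hd (pth l r) = l" "pth l r \<noteq> []" using pth[OF a(2) rI] by (auto simp: spath_def)
  let ?z = "rev (pth j r)"
  have "spath ET ?z" using p spath_rev by blast
  moreover have "hd ?z = r" "last ?z = j" using p by (auto simp: hd_rev last_rev)
  moreover have "l \<in> set ?z" using a pl by (metis hd_in_set list.set_intros(2) set_rev)
  ultimately show ?thesis unfolding on_path_def by blast
qed

lemma child_dir:
  assumes rI: "r \<in> I" and e: "{l,j} \<in> ET"
  shows "on_path ET r l j \<or> on_path ET r j l"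
proof -
  have e': "{j,l} \<in> ET" using e by (simp add: insert_commute)
  have "r \<in> side j l \<or> r \<in> side l j" using side_split[OF e rI] by blast
  then show ?thesis using child_dir1[OF rI e] child_dir1[OF rI e'] by blast
qed
end

lemma grouping:
  fixes w :: "'j \<Rightarrow> real"
  assumes fin: "finite J" and le: "\<And>j. j \<in> J \<Longrightarrow> w j \<le> c" and tot: "sum w J \<le> 2 * c"
    and c0: "0 \<le> c"
  shows "\<exists>J1 J2 J3. J1 \<union> J2 \<union> J3 = J \<and> J1 \<inter> J2 = {} \<and> J1 \<inter> J3 = {} \<and> J2 \<inter> J3 = {} \<and>
     sum w J1 \<le> c \<and> sum w J2 \<le> c \<and> sum w J3 \<le> c"
proof -
  let ?P = "\<lambda>A. A \<subseteq> J \<and> sum w A \<le> c"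
  have P0: "?P {}" using c0 by simp
  have "\<forall>A. ?P A \<longrightarrow> card A < Suc (card J)" using fin by (metis card_mono le_imp_less_Suc)
  then obtain J1 where J1: "?P J1" and mx: "\<And>A. ?P A \<Longrightarrow> card A \<le> card J1"
    using ex_has_greatest_nat[of ?P "{}" card "Suc (card J)", OF P0] by blast
  have fJ1: "finite J1" using J1 fin finite_subset by blast
  show ?thesis
  proof (cases "J1 = J")
    case True
    then show ?thesis using J1 c0 by (intro exI[of _ J1] exI[of _ "{}"]) auto
  next
    case False
    then obtain x where x: "x \<in> J" "x \<notin> J1" using J1 by blast
    have gt: "sum w (insert x J1) > c"
    proof (rule ccontr)
      assume "\<not> ?thesis"
      then have "?P (insert x J1)" using J1 x by auto
      then have "card (insert x J1) \<le> card J1" using mx by blast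
      then show False using x fJ1 by simp
    qed
    have s1: "sum w (insert x J1) = w x + sum w J1" using x fJ1 by simp
    have sub: "insert x J1 \<subseteq> J" using J1 x by auto
    have "sum w J = sum w (J - insert x J1) + sum w (insert x J1)"
      using sum.subset_diff[OF sub fin] .
    then have s3: "sum w (J - insert x J1) \<le> c" using gt tot by linarith
    have u: "J1 \<union> {x} \<union> (J - insert x J1) = J" using J1 x by auto
    have d: "J1 \<inter> {x} = {}" "J1 \<inter> (J - insert x J1) = {}" "{x} \<inter> (J - insert x J1) = {}"
      using x by auto
    have "sum w {x} \<le> c" using le[OF x(1)] by simp
    then show ?thesis using u d J1 s3 by blast
  qed
qed



lemma arith_aux: "(xl::real) + xj = 2 * s + 1 \<Longrightarrow> (n - xl + 1) / 2 < a \<Longrightarrow>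
  (n - xj + 1)/2 < b \<Longrightarrow> a + b = n - s \<Longrightarrow> False"
  by (simp add: field_simps)

theorem lemma3:
  fixes V :: "'a set" and E :: "'a set set" and n t :: nat
    and I :: "'b set" and r :: 'b and ET :: "'b set set" and X :: "'b \<Rightarrow> 'a set"
  assumes "graph V E" and "card V = n" and "treewidth V E = t"
    and "normalized_tree_decomp V E I r ET X" and "width I X = t"
  shows "\<exists>l\<in>I. \<exists>V1 V2 V3. V1 \<union> V2 \<union> V3 = V - X l \<and>
           V1 \<inter> V2 = {} \<and> V1 \<inter> V3 = {} \<and> V2 \<inter> V3 = {} \<and>
           (\<forall>u\<in>V1. \<forall>v\<in>V2. {u, v} \<notin> E) \<and>
           (\<forall>u\<in>V1. \<forall>v\<in>V3. {u, v} \<notin> E) \<and>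
           (\<forall>u\<in>V2. \<forall>v\<in>V3. {u, v} \<notin> E) \<and>
           (\<forall>W\<in>{V1, V2, V3}. real (card W) \<le> (real n - real (card (X l)) + 1) / 2)"
proof -
  have td: "tree_decomp V E I ET X" and rI: "r \<in> I"
    and norm: "\<forall>i\<in>I. \<forall>i'\<in>I. child ET r i i' \<longrightarrow> card ((X i' - X i) \<union> (X i - X i')) = 1"
    using assms(4) unfolding normalized_tree_decomp_def by auto
  have tI: "tree I ET" using td unfolding tree_decomp_def by blast
  have XV: "\<And>i. i\<in>I \<Longrightarrow> X i \<subseteq> V" using td unfolding tree_decomp_def by blast
  have cover: "(\<Union>i\<in>I. X i) = V" using td unfolding tree_decomp_def by blast
  have Eb: "\<And>e. e\<in>E \<Longrightarrow> \<exists>i\<in>I. e \<subseteq> X i" using td unfolding tree_decomp_def by blast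
  have sep: "\<And>i j k. i\<in>I \<Longrightarrow> j\<in>I \<Longrightarrow> k\<in>I \<Longrightarrow> on_path ET i j k \<Longrightarrow> X i \<inter> X k \<subseteq> X j"
    using td unfolding tree_decomp_def by blast
  interpret tr I ET by unfold_locales (rule tI)
  have finV: "finite V" using assms(1) graph_def by auto
  have finX: "\<And>i. i \<in> I \<Longrightarrow> finite (X i)" using XV finV finite_subset by blast
  have cardX: "\<And>i. i \<in> I \<Longrightarrow> card (X i) \<le> n" using XV finV assms(2) card_mono by metis
  have sepn: "\<And>l j j' k k'. l \<in> I \<Longrightarrow> k \<in> side l j \<Longrightarrow> k' \<in> side l j' \<Longrightarrow> j \<noteq> j' \<Longrightarrow>
     X k \<inter> X k' \<subseteq> X l"
    using sep sep_node side_I by (meson subsetD)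
  define B where "B l j = (\<Union>k\<in>side l j. X k) - X l" for l j
  define c where "c l = (real n - real (card (X l)) + 1) / 2" for l
  define big where "big l j \<longleftrightarrow> {l,j} \<in> ET \<and> real (card (B l j)) > c l" for l j
  have BV: "\<And>l j. B l j \<subseteq> V - X l" using XV side_I unfolding B_def by blast
  have finB: "\<And>l j. finite (B l j)" using BV finV finite_subset by blast
  have good: "\<exists>V1 V2 V3. V1 \<union> V2 \<union> V3 = V - X l \<and>
           V1 \<inter> V2 = {} \<and> V1 \<inter> V3 = {} \<and> V2 \<inter> V3 = {} \<and>
           (\<forall>u\<in>V1. \<forall>v\<in>V2. {u, v} \<notin> E) \<and>
           (\<forall>u\<in>V1. \<forall>v\<in>V3. {u, v} \<notin> E) \<and>
           (\<forall>u\<in>V2. \<forall>v\<in>V3. {u, v} \<notin> E) \<and>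
           (\<forall>W\<in>{V1, V2, V3}. real (card W) \<le> (real n - real (card (X l)) + 1) / 2)"
    if lI: "l \<in> I" and nb: "\<forall>j. \<not> big l j" for l
  proof -
    define J where "J = {j. {l,j} \<in> ET}"
    have "J \<subseteq> I" using edge unfolding J_def by blast
    then have finJ: "finite J" using finI finite_subset by blast
    have Bcov: "(\<Union>j\<in>J. B l j) = V - X l"
    proof
      show "(\<Union>j\<in>J. B l j) \<subseteq> V - X l" using BV by blast
    next
      show "V - X l \<subseteq> (\<Union>j\<in>J. B l j)"
      proof
        fix v assume v: "v \<in> V - X l"
        then obtain k where k: "k \<in> I" "v \<in> X k" using cover by blast
        have kl: "k \<noteq> l" using k v by auto
        have "{l, nb l k} \<in> ET" using pth_step[OF lI k(1) kl] by blast
        moreover have "k \<in> side l (nb l k)" using k kl by (simp add: side_def)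
        ultimately show "v \<in> (\<Union>j\<in>J. B l j)" using v k unfolding J_def B_def by blast
      qed
    qed
    have Bdisj: "B l j \<inter> B l j' = {}" if "j \<noteq> j'" for j j'
      using sepn[OF lI _ _ that] unfolding B_def by blast
    have Bedge: "j = j'" if hu: "u \<in> B l j" "v \<in> B l j'" "{u,v} \<in> E" for u v j j'
    proof -
      obtain k where k: "k \<in> I" "{u,v} \<subseteq> X k" using Eb[OF hu(3)] by blast
      have kl: "k \<noteq> l" using k hu(1) unfolding B_def by blast
      have ks: "k \<in> side l (nb l k)" using k kl by (simp add: side_def)
      obtain k0 where k0: "k0 \<in> side l j" "u \<in> X k0" using hu(1) unfolding B_def by blast
      obtain k1 where k1: "k1 \<in> side l j'" "v \<in> X k1" using hu(2) unfolding B_def by blast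
      have "j = nb l k"
      proof (rule ccontr)
        assume "j \<noteq> nb l k"
        then have "u \<in> X l" using sepn[OF lI k0(1) ks] k0 k by blast
        then show False using hu(1) unfolding B_def by blast
      qed
      moreover have "j' = nb l k"
      proof (rule ccontr)
        assume "j' \<noteq> nb l k"
        then have "v \<in> X l" using sepn[OF lI k1(1) ks] k1 k by blast
        then show False using hu(2) unfolding B_def by blast
      qed
      ultimately show ?thesis by simp
    qed
    have "card (V - X l) = (\<Sum>j\<in>J. card (B l j))"
      using card_UN_disjoint[OF finJ, of "B l"] finB Bdisj Bcov by simp
    moreover have "card (V - X l) = n - card (X l)"
      using card_Diff_subset[OF finX[OF lI] XV[OF lI]] assms(2) by simp
    ultimately have "(\<Sum>j\<in>J. card (B l j)) = n - card (X l)" by simp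
    then have "real (\<Sum>j\<in>J. card (B l j)) = real n - real (card (X l))"
      using cardX[OF lI] by (simp add: of_nat_diff)
    then have tot: "(\<Sum>j\<in>J. real (card (B l j))) = real n - real (card (X l))"
      by (simp add: of_nat_sum)
    have le: "\<And>j. j \<in> J \<Longrightarrow> real (card (B l j)) \<le> c l" using nb unfolding big_def J_def by force
    have c0: "0 \<le> c l" using cardX[OF lI] unfolding c_def by simp
    have tot2: "(\<Sum>j\<in>J. real (card (B l j))) \<le> 2 * c l" using tot unfolding c_def by simp
    obtain J1 J2 J3 where JJ: "J1 \<union> J2 \<union> J3 = J" "J1 \<inter> J2 = {}" "J1 \<inter> J3 = {}" "J2 \<inter> J3 = {}"
      "(\<Sum>j\<in>J1. real (card (B l j))) \<le> c l" "(\<Sum>j\<in>J2. real (card (B l j))) \<le> c l"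
      "(\<Sum>j\<in>J3. real (card (B l j))) \<le> c l"
      using grouping[OF finJ le tot2 c0] by blast
    have cardU: "real (card (\<Union>j\<in>A. B l j)) = (\<Sum>j\<in>A. real (card (B l j)))" if "A \<subseteq> J" for A
    proof -
      have "finite A" using finJ that finite_subset by blast
      then have "card (\<Union>j\<in>A. B l j) = (\<Sum>j\<in>A. card (B l j))"
        by (intro card_UN_disjoint) (auto simp: finB Bdisj)
      then show ?thesis by simp
    qed
    let ?V1 = "\<Union>j\<in>J1. B l j" and ?V2 = "\<Union>j\<in>J2. B l j" and ?V3 = "\<Union>j\<in>J3. B l j"
    have U: "?V1 \<union> ?V2 \<union> ?V3 = V - X l" using JJ(1) Bcov by blast
    have UD: "(\<Union>j\<in>A. B l j) \<inter> (\<Union>j\<in>A'. B l j) = {}" if "A \<inter> A' = {}" for A A'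
    proof (rule equals0I)
      fix x assume "x \<in> (\<Union>j\<in>A. B l j) \<inter> (\<Union>j\<in>A'. B l j)"
      then obtain j j' where jj: "j \<in> A" "j' \<in> A'" "x \<in> B l j" "x \<in> B l j'" by blast
      then have "j \<noteq> j'" using \<open>A \<inter> A' = {}\<close> by blast
      then show False using Bdisj jj by blast
    qed
    have UN: "\<forall>u\<in>(\<Union>j\<in>A. B l j). \<forall>v\<in>(\<Union>j\<in>A'. B l j). {u, v} \<notin> E" if "A \<inter> A' = {}" for A A'
    proof (intro ballI notI)
      fix u v assume u: "u \<in> (\<Union>j\<in>A. B l j)" and v: "v \<in> (\<Union>j\<in>A'. B l j)" and e: "{u,v} \<in> E"
      obtain j where j: "j \<in> A" "u \<in> B l j" using u by blast
      obtain j' where j': "j' \<in> A'" "v \<in> B l j'" using v by blast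
      have "j = j'" using Bedge[OF j(2) j'(2) e] .
      then show False using j(1) j'(1) \<open>A \<inter> A' = {}\<close> by blast
    qed
    have D: "?V1 \<inter> ?V2 = {}" "?V1 \<inter> ?V3 = {}" "?V2 \<inter> ?V3 = {}"
      by (rule UD[OF JJ(2)], rule UD[OF JJ(3)], rule UD[OF JJ(4)])
    have N: "\<forall>u\<in>?V1. \<forall>v\<in>?V2. {u, v} \<notin> E" "\<forall>u\<in>?V1. \<forall>v\<in>?V3. {u, v} \<notin> E"
      "\<forall>u\<in>?V2. \<forall>v\<in>?V3. {u, v} \<notin> E"
      by (rule UN[OF JJ(2)], rule UN[OF JJ(3)], rule UN[OF JJ(4)])
    have sub: "J1 \<subseteq> J" "J2 \<subseteq> J" "J3 \<subseteq> J" using JJ(1) by auto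
    have C: "real (card ?V1) \<le> c l" "real (card ?V2) \<le> c l" "real (card ?V3) \<le> c l"
      using cardU[OF sub(1)] cardU[OF sub(2)] cardU[OF sub(3)] JJ(5-7) by simp_all
    then have C': "\<forall>W\<in>{?V1, ?V2, ?V3}. real (card W) \<le> (real n - real (card (X l)) + 1) / 2"
      unfolding c_def by auto
    show ?thesis
      apply (rule exI[of _ ?V1])
      apply (rule exI[of _ ?V2])
      apply (rule exI[of _ ?V3])
      apply (intro conjI)
      apply (fact U)
      apply (fact D(1))
      apply (fact D(2))
      apply (fact D(3))
      apply (fact N(1))
      apply (fact N(2))
      apply (fact N(3))
      apply (fact C')
      done
  qed
  have noboth: "\<not> big j l" if bg: "big l j" for l j
  proof
    assume bg2: "big j l"
    have e: "{l,j} \<in> ET" using bg big_def by blast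
    have e': "{j,l} \<in> ET" using e by (simp add: insert_commute)
    have lI: "l \<in> I" and jI: "j \<in> I" using edge e by auto
    define R where "R = (\<Union>k\<in>side l j. X k)"
    define L where "L = (\<Union>k\<in>side j l. X k)"
    define S where "S = X l \<inter> X j"
    have LR: "L \<union> R = V"
    proof
      show "L \<union> R \<subseteq> V" using XV side_I unfolding L_def R_def by blast
    next
      show "V \<subseteq> L \<union> R"
      proof
        fix v assume "v \<in> V"
        then obtain k where k: "k \<in> I" "v \<in> X k" using cover by blast
        have "k \<in> side l j \<or> k \<in> side j l" using side_split[OF e k(1)] by blast
        then show "v \<in> L \<union> R" using k unfolding L_def R_def by blast
      qed
    qed
    have LRS: "L \<inter> R \<subseteq> S"
    proof
      fix v assume "v \<in> L \<inter> R"
      then obtain k k' where k: "k \<in> side l j" "v \<in> X k" and k': "k' \<in> side j l" "v \<in> X k'"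
        unfolding L_def R_def by blast
      have kI: "k \<in> I" "k' \<in> I" using k k' side_I by auto
      have "v \<in> X l"
      proof (cases "k' = l")
        case True then show ?thesis using k' by simp
      next
        case False
        have "k' \<notin> side l j" using side_split[OF e kI(2)] k' by blast
        then have "k' \<in> side l (nb l k')" "nb l k' \<noteq> j" using kI False by (auto simp: side_def)
        then show ?thesis using sepn[OF lI k(1)] k k' by blast
      qed
      moreover have "v \<in> X j"
      proof (cases "k = j")
        case True then show ?thesis using k by simp
      next
        case False
        have "k \<notin> side j l" using side_split[OF e kI(1)] k by blast
        then have "k \<in> side j (nb j k)" "nb j k \<noteq> l" using kI False by (auto simp: side_def)
        then show ?thesis using sepn[OF jI k'(1)] k k' by blast
      qed
      ultimately show "v \<in> S" unfolding S_def by blast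
    qed
    have XlL: "X l \<subseteq> L" using in_side[OF e'] unfolding L_def by blast
    have XjR: "X j \<subseteq> R" using in_side[OF e] unfolding R_def by blast
    have B1: "B l j = R - S"
    proof -
      have "B l j = R - X l" unfolding B_def R_def by simp
      moreover have "S \<subseteq> X l" "R \<inter> X l \<subseteq> S" using LRS XlL unfolding S_def by blast+
      ultimately show ?thesis by blast
    qed
    have B2: "B j l = L - S"
    proof -
      have "B j l = L - X j" unfolding B_def L_def by simp
      moreover have "S \<subseteq> X j" "L \<inter> X j \<subseteq> S" using LRS XjR unfolding S_def by blast+
      ultimately show ?thesis by blast
    qed
    have SV: "S \<subseteq> V" using XV lI unfolding S_def by blast
    have finS: "finite S" using SV finV finite_subset by blast
    have "(R - S) \<union> (L - S) = V - S" "(R - S) \<inter> (L - S) = {}" using LR LRS by blast+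
    then have "card (R - S) + card (L - S) = card (V - S)"
      using finB[of l j] finB[of j l] B1 B2 card_Un_disjoint[of "R - S" "L - S"] by simp
    also have "\<dots> = n - card S" using card_Diff_subset[OF finS SV] assms(2) by simp
    finally have sum1: "real (card (B l j)) + real (card (B j l)) = real n - real (card S)"
      using B1 B2 card_mono[OF finV SV] assms(2) by (simp add: of_nat_diff)
    have "child ET r l j \<or> child ET r j l"
      using child_dir[OF rI e] e e' edge[OF e] unfolding child_def by blast
    then have d1: "card ((X j - X l) \<union> (X l - X j)) = 1"
      using norm lI jI by (metis Un_commute)
    have fl: "finite (X l)" "finite (X j)" using finX lI jI by auto
    have "card (X l) = card S + card (X l - X j)"
      unfolding S_def using card_Int_Diff[OF fl(1), of "X j"] .
    moreover have "card (X j) = card S + card (X j - X l)"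
      unfolding S_def using card_Int_Diff[OF fl(2), of "X l"] by (simp add: Int_commute)
    moreover have "card ((X j - X l) \<union> (X l - X j)) = card (X j - X l) + card (X l - X j)"
      using fl by (intro card_Un_disjoint) auto
    ultimately have "real (card (X l)) + real (card (X j)) = 2 * real (card S) + 1"
      using d1 by linarith
    moreover have "(real n - real (card (X l)) + 1) / 2 < real (card (B l j))"
      using bg unfolding big_def c_def by blast
    moreover have "(real n - real (card (X j)) + 1) / 2 < real (card (B j l))"
      using bg2 unfolding big_def c_def by blast
    ultimately show False using sum1 arith_aux by blast
  qed
  show ?thesis
  proof (cases "\<exists>l j. big l j")
    case False
    then have nr: "\<forall>j. \<not> big r j" by blast
    show ?thesis apply (rule bexI[where x=r]) apply (rule good[OF rI nr]) apply (rule rI) done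
  next
    case True
    then obtain p where "big (fst p) (snd p)" by auto
    then obtain q where q: "big (fst q) (snd q)"
      and qm: "\<And>p. big (fst p) (snd p) \<Longrightarrow> card (side (fst q) (snd q)) \<le> card (side (fst p) (snd p))"
      using ex_has_least_nat[of "\<lambda>p. big (fst p) (snd p)" p "\<lambda>p. card (side (fst p) (snd p))"] by blast
    define l where "l = fst q"
    define j where "j = snd q"
    have bq: "big l j" using q l_def j_def by simp
    have e: "{l,j} \<in> ET" using bq big_def by blast
    have jI: "j \<in> I" using edge e by auto
    have nj: "\<forall>k. \<not> big j k"
    proof (intro allI notI)
      fix k assume bk: "big j k"
      show False
      proof (cases "k = l")
        case True then show False using noboth[OF bq] bk by simp
      next
        case False
        have e2: "{j,k} \<in> ET" using bk big_def by blast
        have "side j k \<subset> side l j" using side_sub[OF e e2 False] .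
        then have "card (side j k) < card (side l j)" using finI side_I[of l j] psubset_card_mono[of "side l j" "side j k"] finite_subset by blast
        moreover have "card (side l j) \<le> card (side j k)" using qm[of "(j,k)"] bk l_def j_def by simp
        ultimately show False by simp
      qed
    qed
    show ?thesis apply (rule bexI[where x=j]) apply (rule good[OF jI nj]) apply (rule jI) done
  qed
qed

end
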